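(* Let $\mathcal A=(Q,\Sigma,\delta,\rho)$ be a connected bireversible Mealy automaton whose labeled orbit tree $\mathfrak t(\mathcal A)$ has no active self-liftable branch, let $\mathfrak j$ be a jungle tree of $\mathfrak t(\mathcal A)$ with trunk of length $n$, and let $S$ be a liana covering up $\mathfrak j$. Then for all $\mathbf t,\mathbf u,\mathbf v\in Q^*$ with $\mathbf{tuv}\in S$, there exists $\mathbf w\in Q^*$ such that $\mathbf{tuvwu}\in S$.
   Context: Mealy automata. A Mealy automaton is $\mathcal A=(Q,\Sigma,\delta,\rho)$ with $Q,\Sigma$ finite non-empty sets, $\delta=(\delta_i\colon Q\to Q)_{i\in\Sigma}$, $\rho=(\rho_x\colon\Sigma\to\Sigma)_{x\in Q}$; it has a transition $x\xrightarrow{i\mid\rho_x(i)}\delta_i(x)$ for each $x,i$. It is invertible if each $\rho_x$ is a permutation of $\Sigma$, reversible if each $\delta_i$ is a permutation of $Q$, bireversible if it is invertible, reversible, and for each $j\in\Sigma$ the map $x\mapsto\delta_{\rho_x^{-1}(j)}(x)$ is a permutation of $Q$. It is connected if the directed graph on $Q$ with edges $x\to\delta_i(x)$ is connected. Extensions: $\rho_x(i\mathbf s)=\rho_x(i)\rho_{\delta_i(x)}(\mathbf s)$ on $\Sigma^*$; for $\mathbf u=x_1\cdots x_m$, $\rho_{\mathbf u}=\rho_{x_m}\circ\cdots\circ\rho_{x_1}$; dually $\delta_i(x\mathbf u)=\delta_i(x)\delta_{\rho_x(i)}(\mathbf u)$ on $Q^*$, $\delta_{i_1\cdots i_m}=\delta_{i_m}\circ\cdots\circ\delta_{i_1}$.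 The $n$-th power $\mathcal A^n$ has stateset $Q^n$ and transitions $\mathbf u\xrightarrow{i\mid\rho_{\mathbf u}(i)}\delta_i(\mathbf u)$; for reversible $\mathcal A$ its connected components are the orbits of $Q^n$ under the maps $\delta_{\mathbf s}$, $\mathbf s\in\Sigma^*$. Orbit tree. For reversible $\mathcal A$, $\mathfrak t(\mathcal A)$ is the rooted tree whose vertices at level $n\ge0$ are the connected components of $\mathcal A^n$, with an edge from the component of $\mathbf u\in Q^n$ to the component of $\mathbf ux$ for all $\mathbf u\in Q^n$, $x\in Q$; the edge $C\to D$ is labeled $\#D/\#C$. Paths go downward; $\top,\bot$ denote first and last vertex of a path; the level of an edge/path is that of its top vertex. A word in $Q^*\cup Q^\omega$ represents the initial path through the components of its prefixes. Edge $e$ is liftable to edge $f$ if every word of $\bot(e)$ has a suffix in $\bot(f)$; a path $(e_i)_{i\in I}$ is liftable to $(f_i)_{i\in I}$ if each $e_i$ is liftable to $f_i$. An edge $f$ is a legitimate child of $e$ if $\top(f)=\bot(e)$ and $f$ is liftable to $e$. A path or subtree $\mathfrak s$ is $k$-self-liftable ($k>0$) if for every $i\ge0$ every path in $\mathfrak s$ starting at level $i+k$ is liftable to a path in $\mathfrak s$ starting at level $i$; self-liftable if $k$-self-liftable for some $k>0$. A branch is an infinite initial path; active if its label sequence is not eventually constantly $1$. Jungle trees. Let $\mathbf e$ be a finite 1-self-liftable initial path of length $n$ whose last edge has at least two legitimate children, all of label $1$. The jungle tree $\mathfrak j(\mathbf e)$ consists of $\mathbf e$ (its trunk) together with all edges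 that are descendants of $\bot(\mathbf e)$ and liftable to the last edge of $\mathbf e$. Stems are the words of $\bot(\mathbf e)\subseteq Q^n$. A $\mathfrak j$-word is a word of $Q^*\cup Q^\omega$ representing an initial path of $\mathfrak j$. A liana covering up $\mathfrak j$ is a set $S=\mathbf w L_{\mathbf w}$ (together with the prefixes of $\mathbf w$) of $\mathfrak j$-words, where $\mathbf w\in Q^n$ is a stem and $L_{\mathbf w}\subseteq Q^*\cup Q^\omega$ is prefix-closed, such that each vertex of $\mathfrak j$ is represented by exactly one word of $S$ (equivalently, $L_{\mathbf w}$ viewed as a tree is regular of the same arity as $\mathfrak j$, the arity being the number of legitimate children of the last trunk edge). *)

theory Defs
  imports Complex_Main "HOL-Library.Sublist"
begin

text \<open>A Mealy automaton with finite nonempty stateset Q = UNIV :: 'q set and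
 alphabet Sigma = UNIV :: 's set is given by d (delta) and r (rho):
 transition  x --i|r x i--> d i x.\<close>

definition invertible :: "('q \<Rightarrow> 's \<Rightarrow> 's) \<Rightarrow> bool" where
  "invertible r \<longleftrightarrow> (\<forall>x. bij (r x))"

definition reversible :: "('s \<Rightarrow> 'q \<Rightarrow> 'q) \<Rightarrow> bool" where
  "reversible d \<longleftrightarrow> (\<forall>i. bij (d i))"

definition bireversible :: "('s \<Rightarrow> 'q \<Rightarrow> 'q) \<Rightarrow> ('q \<Rightarrow> 's \<Rightarrow> 's) \<Rightarrow> bool" where
  "bireversible d r \<longleftrightarrow> invertible r \<and> reversible d \<and>
     (\<forall>j. bij (\<lambda>x. d (inv (r x) j) x))"

definition connected_aut :: "('s \<Rightarrow> 'q \<Rightarrow> 'q) \<Rightarrow> bool" where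
  "connected_aut d \<longleftrightarrow>
     (let E = {(x, d i x) | x i. True} in \<forall>x y. (x, y) \<in> (E \<union> E\<inverse>)\<^sup>*)"

fun dw :: "('s \<Rightarrow> 'q \<Rightarrow> 'q) \<Rightarrow> ('q \<Rightarrow> 's \<Rightarrow> 's) \<Rightarrow> 's \<Rightarrow> 'q list \<Rightarrow> 'q list" where
  "dw d r i [] = []"
| "dw d r i (x # u) = d i x # dw d r (r x i) u"

text \<open>Edges of the powers A^n (all n at once; dw preserves length).\<close>
definition pow_edges :: "('s \<Rightarrow> 'q \<Rightarrow> 'q) \<Rightarrow> ('q \<Rightarrow> 's \<Rightarrow> 's) \<Rightarrow> ('q list \<times> 'q list) set" where
  "pow_edges d r = {(u, dw d r i u) | u i. True}"

text \<open>Connected component of A^(length u) containing u (a vertex of the orbit tree).\<close>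
definition comp :: "('s \<Rightarrow> 'q \<Rightarrow> 'q) \<Rightarrow> ('q \<Rightarrow> 's \<Rightarrow> 's) \<Rightarrow> 'q list \<Rightarrow> 'q list set" where
  "comp d r u = {v. (u, v) \<in> (pow_edges d r \<union> (pow_edges d r)\<inverse>)\<^sup>*}"

definition root :: "('s \<Rightarrow> 'q \<Rightarrow> 'q) \<Rightarrow> ('q \<Rightarrow> 's \<Rightarrow> 's) \<Rightarrow> 'q list set" where
  "root d r = comp d r []"

definition tree_edges :: "('s \<Rightarrow> 'q \<Rightarrow> 'q) \<Rightarrow> ('q \<Rightarrow> 's \<Rightarrow> 's) \<Rightarrow> ('q list set \<times> 'q list set) set" where
  "tree_edges d r = {(comp d r u, comp d r (u @ [x])) | u x. True}"

definition label :: "'q list set \<times> 'q list set \<Rightarrow> real" where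
  "label e = real (card (snd e)) / real (card (fst e))"

definition liftable :: "'q list set \<times> 'q list set \<Rightarrow> 'q list set \<times> 'q list set \<Rightarrow> bool" where
  "liftable e f \<longleftrightarrow> (\<forall>w \<in> snd e. \<exists>s \<in> snd f. suffix s w)"

definition is_branch :: "('s \<Rightarrow> 'q \<Rightarrow> 'q) \<Rightarrow> ('q \<Rightarrow> 's \<Rightarrow> 's) \<Rightarrow> (nat \<Rightarrow> 'q list set) \<Rightarrow> bool" where
  "is_branch d r V \<longleftrightarrow> V 0 = root d r \<and> (\<forall>i. (V i, V (Suc i)) \<in> tree_edges d r)"

definition active_branch :: "(nat \<Rightarrow> 'q list set) \<Rightarrow> bool" where
  "active_branch V \<longleftrightarrow> \<not> (\<exists>N. \<forall>i\<ge>N. label (V i, V (Suc i)) = 1)"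

definition self_liftable_branch :: "(nat \<Rightarrow> 'q list set) \<Rightarrow> bool" where
  "self_liftable_branch V \<longleftrightarrow> (\<exists>k>0. \<forall>i j.
      liftable (V (i + k + j), V (Suc (i + k + j))) (V (i + j), V (Suc (i + j))))"

definition initial_path :: "('s \<Rightarrow> 'q \<Rightarrow> 'q) \<Rightarrow> ('q \<Rightarrow> 's \<Rightarrow> 's) \<Rightarrow> 'q list set list \<Rightarrow> nat \<Rightarrow> bool" where
  "initial_path d r vs n \<longleftrightarrow> length vs = Suc n \<and> vs ! 0 = root d r \<and>
     (\<forall>i<n. (vs ! i, vs ! Suc i) \<in> tree_edges d r)"

definition path_edges :: "'q list set list \<Rightarrow> ('q list set \<times> 'q list set) list" where
  "path_edges vs = map (\<lambda>i. (vs ! i, vs ! Suc i)) [0..<length vs - 1]"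

definition k_self_liftable_path :: "('q list set \<times> 'q list set) list \<Rightarrow> nat \<Rightarrow> bool" where
  "k_self_liftable_path es k \<longleftrightarrow> (\<forall>i m. i + k + m \<le> length es \<longrightarrow>
      list_all2 liftable (take m (drop (i + k) es)) (take m (drop i es)))"

definition legit_child :: "('s \<Rightarrow> 'q \<Rightarrow> 'q) \<Rightarrow> ('q \<Rightarrow> 's \<Rightarrow> 's) \<Rightarrow>
    'q list set \<times> 'q list set \<Rightarrow> 'q list set \<times> 'q list set \<Rightarrow> bool" where
  "legit_child d r e f \<longleftrightarrow> f \<in> tree_edges d r \<and> fst f = snd e \<and> liftable f e"

definition jungle_trunk :: "('s \<Rightarrow> 'q \<Rightarrow> 'q) \<Rightarrow> ('q \<Rightarrow> 's \<Rightarrow> 's) \<Rightarrow> 'q list set list \<Rightarrow> nat \<Rightarrow> bool" where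
  "jungle_trunk d r vs n \<longleftrightarrow> initial_path d r vs n \<and> 0 < n \<and>
     k_self_liftable_path (path_edges vs) 1 \<and>
     (let e = (vs ! (n - 1), vs ! n) in
        (\<exists>f g. f \<noteq> g \<and> legit_child d r e f \<and> legit_child d r e g) \<and>
        (\<forall>f. legit_child d r e f \<longrightarrow> label f = 1))"

definition jungle_edges :: "('s \<Rightarrow> 'q \<Rightarrow> 'q) \<Rightarrow> ('q \<Rightarrow> 's \<Rightarrow> 's) \<Rightarrow> 'q list set list \<Rightarrow>
    ('q list set \<times> 'q list set) set" where
  "jungle_edges d r vs = set (path_edges vs) \<union>
     {f \<in> tree_edges d r. (last vs, fst f) \<in> (tree_edges d r)\<^sup>* \<and>
                          liftable f (last (path_edges vs))}"

definition jungle_vertices :: "('s \<Rightarrow> 'q \<Rightarrow> 'q) \<Rightarrow> ('q \<Rightarrow> 's \<Rightarrow> 's) \<Rightarrow> 'q list set list \<Rightarrow> 'q list set set" where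
  "jungle_vertices d r vs = fst ` jungle_edges d r vs \<union> snd ` jungle_edges d r vs"

definition jword :: "('s \<Rightarrow> 'q \<Rightarrow> 'q) \<Rightarrow> ('q \<Rightarrow> 's \<Rightarrow> 's) \<Rightarrow> 'q list set list \<Rightarrow> 'q list \<Rightarrow> bool" where
  "jword d r vs s \<longleftrightarrow>
     (\<forall>k<length s. (comp d r (take k s), comp d r (take (Suc k) s)) \<in> jungle_edges d r vs)"

text \<open>Liana (finite-word part): S = prefixes of a stem w together with w L, L prefix-closed,
 all words j-words, and each vertex of the jungle tree represented by exactly one word.\<close>
definition liana :: "('s \<Rightarrow> 'q \<Rightarrow> 'q) \<Rightarrow> ('q \<Rightarrow> 's \<Rightarrow> 's) \<Rightarrow> 'q list set list \<Rightarrow> 'q list set \<Rightarrow> bool" where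
  "liana d r vs S \<longleftrightarrow> (\<exists>w L. w \<in> last vs \<and>
     (\<forall>l\<in>L. \<forall>p. prefix p l \<longrightarrow> p \<in> L) \<and>
     S = {p. prefix p w} \<union> (\<lambda>l. w @ l) ` L \<and>
     (\<forall>s\<in>S. jword d r vs s) \<and>
     (\<forall>V\<in>jungle_vertices d r vs. \<exists>!s. s \<in> S \<and> comp d r s = V))"

end

theory Submission
  imports Defs
begin


fun rw :: "('q \<Rightarrow> 's \<Rightarrow> 's) \<Rightarrow> 's \<Rightarrow> 'q list \<Rightarrow> 's" where
  "rw r i [] = i"
| "rw r i (x # u) = rw r (r x i) u"

lemma dw_length[simp]: "length (dw d r i u) = length u"
  by (induction u arbitrary: i) auto

lemma dw_append: "dw d r i (u @ v) = dw d r i u @ dw d r (rw r i u) v"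
  by (induction u arbitrary: i) auto

lemma take_dw: "take k (dw d r i a) = dw d r i (take k a)"
proof (induction a arbitrary: i k)
  case Nil then show ?case by simp
next
  case (Cons x a) then show ?case by (cases k) auto
qed

lemma drop_dw: "drop k (dw d r i a) = dw d r (rw r i (take k a)) (drop k a)"
proof (cases "k \<le> length a")
  case True
  have "dw d r i a = dw d r i (take k a) @ dw d r (rw r i (take k a)) (drop k a)"
    using dw_append[of d r i "take k a" "drop k a"] by simp
  then show ?thesis using True by (simp add: drop_append)
next
  case False then show ?thesis by simp
qed

abbreviation E0 where "E0 d r \<equiv> pow_edges d r \<union> (pow_edges d r)\<inverse>"

lemma E0_sym: "(u, v) \<in> (E0 d r)\<^sup>* \<Longrightarrow> (v, u) \<in> (E0 d r)\<^sup>*"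
proof -
  assume uv: "(u, v) \<in> (E0 d r)\<^sup>*"
  have "sym (E0 d r)" by (auto simp: sym_def)
  then have "sym ((E0 d r)\<^sup>*)" by (rule sym_rtrancl)
  then show ?thesis using uv by (meson symD)
qed

lemma comp_self: "u \<in> comp d r u"
  by (simp add: comp_def)

lemma comp_eq: "v \<in> comp d r u \<Longrightarrow> comp d r v = comp d r u"
  unfolding comp_def using E0_sym rtrancl_trans by (metis (no_types, lifting) Collect_cong mem_Collect_eq)

lemma E0_step_cases: "(a, b) \<in> E0 d r \<Longrightarrow> (\<exists>i. b = dw d r i a) \<or> (\<exists>i. a = dw d r i b)"
  by (auto simp: pow_edges_def)

lemma comp_length: "v \<in> comp d r u \<Longrightarrow> length v = length u"
proof -
  assume "v \<in> comp d r u"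
  then have "(u, v) \<in> (E0 d r)\<^sup>*" by (simp add: comp_def)
  then show ?thesis
    by (induction rule: rtrancl_induct) (auto simp: pow_edges_def)
qed

lemma E0_take: "(a, b) \<in> (E0 d r)\<^sup>* \<Longrightarrow> (take k a, take k b) \<in> (E0 d r)\<^sup>*"
proof (induction rule: rtrancl_induct)
  case base then show ?case by simp
next
  case (step b c)
  have "(take k b, take k c) \<in> E0 d r"
    using step(2) by (auto simp: pow_edges_def take_dw)
  then show ?case using step(3) by (meson rtrancl_into_rtrancl)
qed

lemma E0_drop: "(a, b) \<in> (E0 d r)\<^sup>* \<Longrightarrow> (drop k a, drop k b) \<in> (E0 d r)\<^sup>*"
proof (induction rule: rtrancl_induct)
  case base then show ?case by simp
next
  case (step b c)
  have "(drop k b, drop k c) \<in> E0 d r"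
    using step(2) by (auto simp: pow_edges_def drop_dw)
  then show ?case using step(3) by (meson rtrancl_into_rtrancl)
qed

lemma comp_take: "v \<in> comp d r u \<Longrightarrow> take k v \<in> comp d r (take k u)"
  by (simp add: comp_def E0_take)

lemma comp_drop: "v \<in> comp d r u \<Longrightarrow> drop k v \<in> comp d r (drop k u)"
  by (simp add: comp_def E0_drop)

lemma comp_closed: "p \<in> comp d r u \<Longrightarrow> (p, q) \<in> (E0 d r)\<^sup>* \<Longrightarrow> q \<in> comp d r u"
  by (simp add: comp_def)

lemma comp_E0: "p \<in> comp d r u \<Longrightarrow> (p, q) \<in> E0 d r \<Longrightarrow> q \<in> comp d r u"
  unfolding comp_def by (auto intro: rtrancl_into_rtrancl)

lemma comp_E0': "q \<in> comp d r u \<Longrightarrow> (p, q) \<in> E0 d r \<Longrightarrow> p \<in> comp d r u"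
proof -
  assume a: "q \<in> comp d r u" "(p, q) \<in> E0 d r"
  then have "(q, p) \<in> E0 d r" by auto
  then show ?thesis using a(1) comp_E0 by metis
qed

lemma E0_in: "(u, dw d r i u) \<in> E0 d r"
  by (rule UnI1) (auto simp: pow_edges_def)

lemma bij_inv_app: "bij f \<Longrightarrow> f (inv f y) = y" by (rule surj_f_inv_f[OF bij_is_surj])




lemma dw_snoc: "dw d r i (c @ [x]) = dw d r i c @ [d (rw r i c) x]"
  by (simp add: dw_append)

lemma E0_invariant:
  assumes "\<And>a i. f a = f (dw d r i a)" "(c, c') \<in> (E0 d r)\<^sup>*"
  shows "f c = f c'"
  using assms(2)
proof (induction rule: rtrancl_induct)
  case base then show ?case by simp
next
  case (step b e)
  have "(\<exists>i. e = dw d r i b) \<or> (\<exists>i. b = dw d r i e)" using step(2) by (auto simp: pow_edges_def)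
  then have "f b = f e"
  proof (elim disjE exE)
    fix i assume "e = dw d r i b" then show "f b = f e" using assms(1)[of b i] by simp
  next
    fix i assume "b = dw d r i e" then show "f b = f e" using assms(1)[of e i] by simp
  qed
  then show ?case using step(3) by simp
qed

lemma fiber_right_step:
  assumes rev: "reversible d"
  shows "card {x. c @ [x] \<in> comp d r u} = card {x. dw d r i c @ [x] \<in> comp d r u}"
proof -
  let ?j = "rw r i c"
  let ?f = "d ?j"
  have bj: "bij ?f" using rev by (simp add: reversible_def)
  have img: "?f ` {x. c @ [x] \<in> comp d r u} = {x. dw d r i c @ [x] \<in> comp d r u}"
  proof (intro equalityI subsetI)
    fix y assume "y \<in> ?f ` {x. c @ [x] \<in> comp d r u}"
    then obtain x where x: "c @ [x] \<in> comp d r u" "y = ?f x" by auto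
    have "(c @ [x], dw d r i (c @ [x])) \<in> E0 d r" by (rule E0_in)
    then have "dw d r i (c @ [x]) \<in> comp d r u" by (rule comp_E0[OF x(1)])
    then show "y \<in> {x. dw d r i c @ [x] \<in> comp d r u}" using x(2) by (simp add: dw_snoc)
  next
    fix y assume y: "y \<in> {x. dw d r i c @ [x] \<in> comp d r u}"
    define x where "x = inv ?f y"
    have fx: "?f x = y" unfolding x_def using bj by (rule bij_inv_app)
    have "(c @ [x], dw d r i (c @ [x])) \<in> E0 d r" by (rule E0_in)
    moreover have "dw d r i (c @ [x]) \<in> comp d r u" using y fx by (simp add: dw_snoc)
    ultimately have "c @ [x] \<in> comp d r u" by (rule comp_E0'[rotated])
    then show "y \<in> ?f ` {x. c @ [x] \<in> comp d r u}" using fx by (intro image_eqI[where x=x]) auto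
  qed
  have "inj ?f" using bj bij_is_inj by blast
  then have "card (?f ` {x. c @ [x] \<in> comp d r u}) = card {x. c @ [x] \<in> comp d r u}"
    by (simp add: card_image inj_on_subset)
  then show ?thesis using img by simp
qed

lemma fiber_right:
  assumes "reversible d" "(c, c') \<in> (E0 d r)\<^sup>*"
  shows "card {x. c @ [x] \<in> comp d r u} = card {x. c' @ [x] \<in> comp d r u}"
  by (rule E0_invariant[where f="\<lambda>c. card {x. c @ [x] \<in> comp d r u}", OF _ assms(2)])
     (rule fiber_right_step[OF assms(1)])

lemma fiber_left_step:
  assumes bir: "bireversible d r"
  shows "card {y. y # c \<in> comp d r u} = card {y. y # dw d r i c \<in> comp d r u}"
proof -
  let ?f = "\<lambda>y. d (inv (r y) i) y"
  have bj: "bij ?f" using bir by (simp add: bireversible_def)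
  have rb: "\<And>y. bij (r y)" using bir by (simp add: bireversible_def invertible_def)
  have key: "\<And>y. dw d r (inv (r y) i) (y # c) = ?f y # dw d r i c"
  proof -
    fix y
    have "r y (inv (r y) i) = i" using rb[of y] by (rule bij_inv_app)
    then show "dw d r (inv (r y) i) (y # c) = ?f y # dw d r i c" by simp
  qed
  have img: "?f ` {y. y # c \<in> comp d r u} = {y. y # dw d r i c \<in> comp d r u}"
  proof (intro equalityI subsetI)
    fix z assume "z \<in> ?f ` {y. y # c \<in> comp d r u}"
    then obtain y where y: "y # c \<in> comp d r u" "z = ?f y" by auto
    have "(y # c, dw d r (inv (r y) i) (y # c)) \<in> E0 d r" by (rule E0_in)
    then have "dw d r (inv (r y) i) (y # c) \<in> comp d r u" by (rule comp_E0[OF y(1)])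
    then show "z \<in> {y. y # dw d r i c \<in> comp d r u}" using y(2) key by simp
  next
    fix z assume z: "z \<in> {y. y # dw d r i c \<in> comp d r u}"
    define y where "y = inv ?f z"
    have fy: "?f y = z" unfolding y_def using bj by (rule bij_inv_app)
    have "(y # c, dw d r (inv (r y) i) (y # c)) \<in> E0 d r" by (rule E0_in)
    moreover have "dw d r (inv (r y) i) (y # c) \<in> comp d r u" using z fy key by simp
    ultimately have "y # c \<in> comp d r u" by (rule comp_E0'[rotated])
    then show "z \<in> ?f ` {y. y # c \<in> comp d r u}" using fy by (intro image_eqI[where x=y]) auto
  qed
  have "inj ?f" using bj bij_is_inj by blast
  then have "card (?f ` {y. y # c \<in> comp d r u}) = card {y. y # c \<in> comp d r u}"
    by (simp add: card_image inj_on_subset)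
  then show ?thesis using img by simp
qed

lemma fiber_left:
  assumes "bireversible d r" "(c, c') \<in> (E0 d r)\<^sup>*"
  shows "card {y. y # c \<in> comp d r u} = card {y. y # c' \<in> comp d r u}"
  by (rule E0_invariant[where f="\<lambda>c. card {y. y # c \<in> comp d r u}", OF _ assms(2)])
     (rule fiber_left_step[OF assms(1)])

lemma card_split_right:
  fixes D P :: "'q::finite list set"
  assumes "finite P" "\<forall>e\<in>D. e \<noteq> [] \<and> butlast e \<in> P" "\<forall>c\<in>P. card {y. c @ [y] \<in> D} = k"
  shows "card D = card P * k"
proof -
  have img: "(\<lambda>(c, y). c @ [y]) ` (SIGMA c:P. {y. c @ [y] \<in> D}) = D"
  proof (intro equalityI subsetI)
    fix e assume "e \<in> (\<lambda>(c, y). c @ [y]) ` (SIGMA c:P. {y. c @ [y] \<in> D})"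
    then show "e \<in> D" by auto
  next
    fix e assume e: "e \<in> D"
    then have "e = butlast e @ [last e]" "butlast e \<in> P" using assms(2) by auto
    then show "e \<in> (\<lambda>(c, y). c @ [y]) ` (SIGMA c:P. {y. c @ [y] \<in> D})"
      using e by (intro image_eqI[where x="(butlast e, last e)"]) auto
  qed
  have "card ((\<lambda>(c, y). c @ [y]) ` (SIGMA c:P. {y. c @ [y] \<in> D})) = card (SIGMA c:P. {y. c @ [y] \<in> D})"
    by (rule card_image) (auto simp: inj_on_def)
  then have "card D = card (SIGMA c:P. {y. c @ [y] \<in> D})" using img by simp
  also have "\<dots> = (\<Sum>c\<in>P. card {y. c @ [y] \<in> D})"
    by (rule card_SigmaI) (use assms(1) in auto)
  also have "\<dots> = card P * k" using assms(3) by simp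
  finally show ?thesis .
qed

lemma card_split_left:
  fixes D P :: "'q::finite list set"
  assumes "finite P" "\<forall>e\<in>D. e \<noteq> [] \<and> tl e \<in> P" "\<forall>c\<in>P. card {y. y # c \<in> D} = k"
  shows "card D = card P * k"
proof -
  have img: "(\<lambda>(c, y). y # c) ` (SIGMA c:P. {y. y # c \<in> D}) = D"
  proof (intro equalityI subsetI)
    fix e assume "e \<in> (\<lambda>(c, y). y # c) ` (SIGMA c:P. {y. y # c \<in> D})"
    then show "e \<in> D" by auto
  next
    fix e assume e: "e \<in> D"
    then have "e = hd e # tl e" "tl e \<in> P" using assms(2) by auto
    then show "e \<in> (\<lambda>(c, y). y # c) ` (SIGMA c:P. {y. y # c \<in> D})"
      using e by (intro image_eqI[where x="(tl e, hd e)"]) auto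
  qed
  have "card ((\<lambda>(c, y). y # c) ` (SIGMA c:P. {y. y # c \<in> D})) = card (SIGMA c:P. {y. y # c \<in> D})"
    by (rule card_image) (auto simp: inj_on_def)
  then have "card D = card (SIGMA c:P. {y. y # c \<in> D})" using img by simp
  also have "\<dots> = (\<Sum>c\<in>P. card {y. y # c \<in> D})"
    by (rule card_SigmaI) (use assms(1) in auto)
  also have "\<dots> = card P * k" using assms(3) by simp
  finally show ?thesis .
qed

lemma balanced_reach:
  assumes fin: "finite K" and sub: "G \<subseteq> K \<times> K"
    and bal: "\<forall>a\<in>K. card (G `` {a}) = card (G\<inverse> `` {a})"
    and ab: "(a, b) \<in> G\<^sup>*" and aK: "a \<in> K"
  shows "(b, a) \<in> G\<^sup>*"
proof -
  have bK: "b \<in> K" using ab aK sub by (induction rule: rtrancl_induct) auto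
  define R where "R = {x \<in> K. (b, x) \<in> G\<^sup>*}"
  have finR: "finite R" using fin by (simp add: R_def)
  have finG: "finite G" by (rule finite_subset[OF sub]) (simp add: fin)
  have closed: "\<And>x y. x \<in> R \<Longrightarrow> (x, y) \<in> G \<Longrightarrow> y \<in> R"
    using sub unfolding R_def by (auto intro: rtrancl_into_rtrancl)
  have out: "(SIGMA x:R. G `` {x}) = G \<inter> R \<times> R"
    using closed by auto
  have inn: "(\<lambda>(x, y). (y, x)) ` (SIGMA x:R. G\<inverse> `` {x}) = G \<inter> UNIV \<times> R"
    by auto
  have "card (SIGMA x:R. G `` {x}) = (\<Sum>x\<in>R. card (G `` {x}))"
    by (rule card_SigmaI) (use finR finG in auto)
  then have c1: "card (G \<inter> R \<times> R) = (\<Sum>x\<in>R. card (G `` {x}))"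
    using out by simp
  have "card ((\<lambda>(x, y). (y, x)) ` (SIGMA x:R. G\<inverse> `` {x})) = card (SIGMA x:R. G\<inverse> `` {x})"
    by (rule card_image) (auto simp: inj_on_def)
  also have "\<dots> = (\<Sum>x\<in>R. card (G\<inverse> `` {x}))"
    by (rule card_SigmaI) (use finR finG in auto)
  finally have c2: "card (G \<inter> UNIV \<times> R) = (\<Sum>x\<in>R. card (G\<inverse> `` {x}))" using inn by simp
  have "(\<Sum>x\<in>R. card (G `` {x})) = (\<Sum>x\<in>R. card (G\<inverse> `` {x}))"
    using bal by (intro sum.cong) (auto simp: R_def)
  then have "card (G \<inter> R \<times> R) = card (G \<inter> UNIV \<times> R)" using c1 c2 by simp
  moreover have "G \<inter> R \<times> R \<subseteq> G \<inter> UNIV \<times> R" by auto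
  moreover have "finite (G \<inter> UNIV \<times> R)" using finG by simp
  ultimately have eq: "G \<inter> R \<times> R = G \<inter> UNIV \<times> R" by (meson card_subset_eq)
  have bk: "\<And>x y. y \<in> R \<Longrightarrow> (x, y) \<in> G \<Longrightarrow> x \<in> R"
    using eq by blast
  have "a \<in> R" using ab aK
  proof (induction rule: converse_rtrancl_induct)
    case base then show ?case using bK by (simp add: R_def)
  next
    case (step y z)
    have "z \<in> K" using step(1) sub by auto
    then have "z \<in> R" using step(3) by simp
    then show ?case using bk step(1) by blast
  qed
  then show ?thesis by (simp add: R_def)
qed




lemma suffix_len_drop: "suffix p s \<Longrightarrow> p = drop (length s - length p) s"
  by (auto simp: suffix_def)

locale J =
  fixes d :: "'s::finite \<Rightarrow> 'q::finite \<Rightarrow> 'q" and r :: "'q \<Rightarrow> 's \<Rightarrow> 's"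
    and vs :: "'q list set list" and n :: nat and S :: "'q list set"
    and w :: "'q list" and L :: "'q list set"
  assumes bir: "bireversible d r"
    and trunk: "jungle_trunk d r vs n"
    and wK: "w \<in> last vs"
    and Lpc: "\<forall>l\<in>L. \<forall>p. prefix p l \<longrightarrow> p \<in> L"
    and Sdef: "S = {p. prefix p w} \<union> (\<lambda>l. w @ l) ` L"
    and jw: "\<forall>s\<in>S. jword d r vs s"
    and uniq: "\<forall>V\<in>jungle_vertices d r vs. \<exists>!s. s \<in> S \<and> comp d r s = V"
begin

lemma ip: "initial_path d r vs n" and npos: "0 < n"
  and sl: "k_self_liftable_path (path_edges vs) 1"
  using trunk by (auto simp: jungle_trunk_def)

lemma rev: "reversible d" using bir by (simp add: bireversible_def)

lemma len_vs: "length vs = Suc n" using ip by (simp add: initial_path_def)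

lemma vs_comp: "i \<le> n \<Longrightarrow> \<exists>u. length u = i \<and> vs ! i = comp d r u"
proof (induction i)
  case 0 then show ?case using ip by (auto simp: initial_path_def root_def)
next
  case (Suc i)
  then obtain u0 where u0: "length u0 = i" "vs ! i = comp d r u0" by auto
  have "(vs ! i, vs ! Suc i) \<in> tree_edges d r" using ip Suc(2) by (simp add: initial_path_def)
  then obtain u x where ux: "vs ! i = comp d r u" "vs ! Suc i = comp d r (u @ [x])"
    by (auto simp: tree_edges_def)
  have "u \<in> comp d r u0" using ux(1) u0(2) comp_self by metis
  then have "length u = i" using comp_length u0(1) by metis
  then show ?case using ux(2) by (intro exI[of _ "u @ [x]"]) simp
qed

lemma vs_len: "i \<le> n \<Longrightarrow> v \<in> vs ! i \<Longrightarrow> length v = i"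
  using vs_comp comp_length by metis

definition K where "K = vs ! n"

lemma last_vs: "last vs = K"
proof -
  have "vs \<noteq> []" using len_vs by auto
  then show ?thesis using len_vs by (simp add: K_def last_conv_nth)
qed

lemma K_comp: "K = comp d r w"
proof -
  obtain u where "length u = n" "K = comp d r u" using vs_comp[of n] by (auto simp: K_def)
  then show ?thesis using wK last_vs comp_eq by metis
qed

lemma w_len: "length w = n" using wK last_vs vs_len K_def by auto

lemma K_len: "a \<in> K \<Longrightarrow> length a = n" using vs_len K_def by auto

lemma K_comp': "a \<in> K \<Longrightarrow> comp d r a = K" using K_comp comp_eq by metis

lemma finK: "finite K"
proof -
  have "K \<subseteq> {xs. set xs \<subseteq> UNIV \<and> length xs = n}" using K_len by auto
  then show ?thesis using finite_lists_length_eq[of "UNIV :: 'q set" n] finite_subset by auto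
qed

lemma pe_len: "length (path_edges vs) = n" using len_vs by (simp add: path_edges_def)

lemma pe_nth: "j < n \<Longrightarrow> path_edges vs ! j = (vs ! j, vs ! Suc j)"
  using len_vs by (simp add: path_edges_def)

lemma pe_last: "last (path_edges vs) = (vs ! (n - 1), K)"
proof -
  have "path_edges vs \<noteq> []" using pe_len npos by auto
  then have "last (path_edges vs) = path_edges vs ! (n - 1)" using pe_len by (simp add: last_conv_nth)
  then show ?thesis using pe_nth npos by (simp add: K_def)
qed

definition C where "C = vs ! (n - 1)"

lemma C_comp: "C = comp d r (butlast w)"
proof -
  have "n - 1 < n" using npos by simp
  then have "(vs ! (n - 1), vs ! Suc (n - 1)) \<in> tree_edges d r" using ip unfolding initial_path_def by blast
  then obtain u x where ux: "C = comp d r u" "K = comp d r (u @ [x])"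
    using npos by (auto simp: tree_edges_def C_def K_def)
  have lu: "length u = n - 1" using vs_len[of "n - 1" u] ux(1) comp_self C_def by auto
  have "w \<in> comp d r (u @ [x])" using ux(2) K_comp comp_self by metis
  then have "take (n - 1) w \<in> comp d r (take (n - 1) (u @ [x]))" by (rule comp_take)
  then have "butlast w \<in> comp d r u" using lu w_len by (simp add: butlast_conv_take)
  then show ?thesis using ux(1) comp_eq by metis
qed

lemma finC: "finite C"
proof -
  have "C \<subseteq> {xs. set xs \<subseteq> UNIV \<and> length xs = n - 1}" using vs_len C_def by auto
  then show ?thesis using finite_lists_length_eq[of "UNIV :: 'q set" "n - 1"] finite_subset by auto
qed

lemma C_ne: "butlast w \<in> C" using C_comp comp_self by metis

lemma K_butlast: "a \<in> K \<Longrightarrow> butlast a \<in> C"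
proof -
  assume "a \<in> K"
  then have "a \<in> comp d r w" using K_comp by simp
  then have "take (n - 1) a \<in> comp d r (take (n - 1) w)" by (rule comp_take)
  then show ?thesis using C_comp w_len \<open>a \<in> K\<close> K_len by (simp add: butlast_conv_take)
qed

lemma K_tl: "a \<in> K \<Longrightarrow> tl a \<in> C"
proof (cases "n = 1")
  case True
  assume "a \<in> K"
  then have "length a = 1" using K_len True by simp
  then have "tl a = []" by (cases a) auto
  moreover have "butlast w = []" using w_len True by (cases w) auto
  ultimately show ?thesis using C_ne by simp
next
  case False
  assume aK: "a \<in> K"
  obtain m where nm: "n = Suc (Suc m)" using False npos by (metis One_nat_def Suc_pred neq0_conv)
  let ?es = "path_edges vs"
  have H: "\<forall>i k. i + 1 + k \<le> length ?es \<longrightarrow>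
      list_all2 liftable (take k (drop (i + 1) ?es)) (take k (drop i ?es))"
    using sl by (simp add: k_self_liftable_path_def)
  have le: "m + 1 + 1 \<le> length ?es" using nm pe_len by simp
  have la: "list_all2 liftable (take 1 (drop (m + 1) ?es)) (take 1 (drop m ?es))"
    using H[rule_format, OF le] .
  have d1: "drop (Suc m) ?es = ?es ! (Suc m) # drop (Suc (Suc m)) ?es"
    using Cons_nth_drop_Suc[of "Suc m" ?es] nm pe_len by simp
  have d2: "drop m ?es = ?es ! m # drop (Suc m) ?es"
    using Cons_nth_drop_Suc[of m ?es] nm pe_len by simp
  have "liftable (?es ! (Suc m)) (?es ! m)" using la d1 d2 by simp
  moreover have "?es ! (Suc m) = (C, K)" unfolding C_def K_def using pe_nth[of "Suc m"] nm by simp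
  moreover have "?es ! m = (vs ! m, C)" unfolding C_def using pe_nth[of m] nm by simp
  ultimately obtain p where p: "p \<in> C" "suffix p a" using aK by (auto simp: liftable_def)
  have lp: "length p = Suc m" using p(1) vs_len[of "n - 1" p] nm C_def by simp
  have la2: "length a = Suc (Suc m)" using aK K_len nm by simp
  have "p = drop (length a - length p) a" using p(2) suffix_len_drop by metis
  then have "p = drop 1 a" using lp la2 by simp
  then have "p = tl a" by (simp add: drop_Suc)
  then show ?thesis using p(1) by simp
qed
end



context J begin

definition beta where "beta = card {x. butlast w @ [x] \<in> K}"
definition alpha where "alpha = card {y. y # butlast w \<in> K}"

lemma C_reach: "c \<in> C \<Longrightarrow> (butlast w, c) \<in> (E0 d r)\<^sup>*"
  using C_comp by (simp add: comp_def)

lemma fib_r: "c \<in> C \<Longrightarrow> card {x. c @ [x] \<in> K} = beta"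
  unfolding beta_def K_comp using fiber_right[OF rev C_reach] by metis

lemma fib_l: "c \<in> C \<Longrightarrow> card {y. y # c \<in> K} = alpha"
  unfolding alpha_def K_comp using fiber_left[OF bir C_reach] by metis

lemma K_ne: "a \<in> K \<Longrightarrow> a \<noteq> []" using K_len npos by auto

lemma cardK_beta: "card K = card C * beta"
  by (rule card_split_right) (use finC K_ne K_butlast fib_r in auto)

lemma cardK_alpha: "card K = card C * alpha"
  by (rule card_split_left) (use finC K_ne K_tl fib_l in auto)

lemma cardC_pos: "card C > 0" using finC C_ne card_gt_0_iff by blast

lemma alpha_beta: "alpha = beta" using cardK_beta cardK_alpha cardC_pos by simp

lemma wK': "w \<in> K" using K_comp comp_self by metis

lemma beta_pos: "beta > 0"
proof -
  have "card K > 0" using finK wK' card_gt_0_iff by blast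
  then show ?thesis using cardK_beta by simp
qed

definition G where "G = {(a, b). a \<in> K \<and> b \<in> K \<and> tl a = butlast b}"

lemma G_sub: "G \<subseteq> K \<times> K" by (auto simp: G_def)

lemma out_deg: "a \<in> K \<Longrightarrow> card (G `` {a}) = beta"
proof -
  assume aK: "a \<in> K"
  have "G `` {a} = (\<lambda>x. tl a @ [x]) ` {x. tl a @ [x] \<in> K}"
  proof (intro equalityI subsetI)
    fix b assume "b \<in> G `` {a}"
    then have b: "b \<in> K" "tl a = butlast b" by (auto simp: G_def)
    then have "b = tl a @ [last b]" using K_ne by simp
    then show "b \<in> (\<lambda>x. tl a @ [x]) ` {x. tl a @ [x] \<in> K}" using b(1)
      by (intro image_eqI[where x="last b"]) auto
  next
    fix b assume "b \<in> (\<lambda>x. tl a @ [x]) ` {x. tl a @ [x] \<in> K}"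
    then show "b \<in> G `` {a}" using aK by (auto simp: G_def)
  qed
  moreover have "card ((\<lambda>x. tl a @ [x]) ` {x. tl a @ [x] \<in> K}) = card {x. tl a @ [x] \<in> K}"
    by (rule card_image) (auto simp: inj_on_def)
  ultimately show ?thesis using fib_r[OF K_tl[OF aK]] by simp
qed

lemma in_deg: "b \<in> K \<Longrightarrow> card (G\<inverse> `` {b}) = beta"
proof -
  assume bK: "b \<in> K"
  have "G\<inverse> `` {b} = (\<lambda>y. y # butlast b) ` {y. y # butlast b \<in> K}"
  proof (intro equalityI subsetI)
    fix a assume "a \<in> G\<inverse> `` {b}"
    then have a: "a \<in> K" "tl a = butlast b" by (auto simp: G_def)
    then have "a = hd a # butlast b" using K_ne by (metis list.collapse)
    then show "a \<in> (\<lambda>y. y # butlast b) ` {y. y # butlast b \<in> K}" using a(1)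
      by (intro image_eqI[where x="hd a"]) auto
  next
    fix a assume "a \<in> (\<lambda>y. y # butlast b) ` {y. y # butlast b \<in> K}"
    then show "a \<in> G\<inverse> `` {b}" using bK by (auto simp: G_def)
  qed
  moreover have "card ((\<lambda>y. y # butlast b) ` {y. y # butlast b \<in> K}) = card {y. y # butlast b \<in> K}"
    by (rule card_image) (auto simp: inj_on_def)
  ultimately show ?thesis using fib_l[OF K_butlast[OF bK]] alpha_beta by simp
qed

lemma G_back: "(a, b) \<in> G\<^sup>* \<Longrightarrow> a \<in> K \<Longrightarrow> (b, a) \<in> G\<^sup>*"
  by (rule balanced_reach[OF finK G_sub]) (use out_deg in_deg in auto)

end



context J begin

definition lst where "lst s = drop (length s - n) s"

lemma S_cases: "s \<in> S \<Longrightarrow> prefix s w \<or> (\<exists>l\<in>L. s = w @ l)" using Sdef by auto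

lemma S_w: "w \<in> S" using Sdef by auto

lemma S_pref: "s \<in> S \<Longrightarrow> prefix p s \<Longrightarrow> p \<in> S"
proof -
  assume sS: "s \<in> S" and ps: "prefix p s"
  from S_cases[OF sS] show ?thesis
  proof
    assume "prefix s w" then have "prefix p w" using ps by (auto simp: prefix_def)
    then show ?thesis using Sdef by auto
  next
    assume "\<exists>l\<in>L. s = w @ l"
    then obtain l where l: "l \<in> L" "s = w @ l" by auto
    then have "prefix p w \<or> (\<exists>us. p = w @ us \<and> prefix us l)" using ps prefix_append by auto
    then show ?thesis using Sdef Lpc l(1) by auto
  qed
qed

lemma S_long: "s \<in> S \<Longrightarrow> n \<le> length s \<Longrightarrow> \<exists>l. s = w @ l"
proof -
  assume sS: "s \<in> S" and ls: "n \<le> length s"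
  from S_cases[OF sS] show ?thesis
  proof
    assume p: "prefix s w"
    then have "length s \<le> length w" by (rule prefix_length_le)
    then have "length s = length w" using ls w_len by simp
    then have "s = w" using p by (auto simp: prefix_def)
    then show ?thesis by simp
  qed auto
qed

lemma S_short: "s \<in> S \<Longrightarrow> length s \<le> n \<Longrightarrow> prefix s w"
proof -
  assume sS: "s \<in> S" and ls: "length s \<le> n"
  from S_cases[OF sS] show ?thesis
  proof
    assume "\<exists>l\<in>L. s = w @ l"
    then obtain l where "s = w @ l" by auto
    then show ?thesis using ls w_len by simp
  qed
qed

lemma lst_comp: "b \<in> comp d r a \<Longrightarrow> lst b \<in> comp d r (lst a)"
proof -
  assume b: "b \<in> comp d r a"
  then have "length b = length a" by (rule comp_length)
  moreover have "drop (length a - n) b \<in> comp d r (drop (length a - n) a)" using b by (rule comp_drop)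
  ultimately show ?thesis by (simp add: lst_def)
qed

lemma lst_K: "s \<in> S \<Longrightarrow> n \<le> length s \<Longrightarrow> lst s \<in> K"
proof -
  assume sS: "s \<in> S" and ls: "n \<le> length s"
  show ?thesis
  proof (cases "length s = n")
    case True
    then have "s = w" using S_long[OF sS ls] w_len by auto
    then show ?thesis using wK' by (simp add: lst_def w_len)
  next
    case False
    define k where "k = length s - 1"
    have kl: "k < length s" and sk: "take (Suc k) s = s" using ls npos by (auto simp: k_def)
    have "jword d r vs s" using jw sS by blast
    then have "(comp d r (take k s), comp d r (take (Suc k) s)) \<in> jungle_edges d r vs"
      using kl unfolding jword_def by blast
    then have je: "(comp d r (take k s), comp d r s) \<in> jungle_edges d r vs" using sk by simp
    show ?thesis
    proof (cases "(comp d r (take k s), comp d r s) \<in> set (path_edges vs)")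
      case True
      then obtain j where j: "j < length (path_edges vs)" "path_edges vs ! j = (comp d r (take k s), comp d r s)"
        by (metis in_set_conv_nth)
      then have jn: "j < n" using pe_len by simp
      then have "comp d r s = vs ! Suc j" using j(2) pe_nth by simp
      then have "s \<in> vs ! Suc j" using comp_self by metis
      then have "length s = Suc j" using vs_len jn by simp
      then show ?thesis using jn ls False by simp
    next
      case False
      then have "liftable (comp d r (take k s), comp d r s) (last (path_edges vs))"
        using je unfolding jungle_edges_def by blast
      then obtain p where p: "p \<in> K" "suffix p s" using comp_self pe_last
        unfolding liftable_def by (metis snd_conv)
      have "p = drop (length s - length p) s" using p(2) by (rule suffix_len_drop)
      then show ?thesis using p(1) K_len[OF p(1)] by (simp add: lst_def)
    qed
  qed
qed

lemma reach_tree: "s \<in> S \<Longrightarrow> n \<le> length s \<Longrightarrow> (K, comp d r s) \<in> (tree_edges d r)\<^sup>*"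
proof -
  assume sS: "s \<in> S" and ls: "n \<le> length s"
  have "\<forall>j. n + j \<le> length s \<longrightarrow> (K, comp d r (take (n + j) s)) \<in> (tree_edges d r)\<^sup>*"
  proof
    fix j show "n + j \<le> length s \<longrightarrow> (K, comp d r (take (n + j) s)) \<in> (tree_edges d r)\<^sup>*"
    proof (induction j)
      case 0
      obtain l where "s = w @ l" using S_long[OF sS ls] by blast
      then have "take n s = w" using w_len by simp
      then show ?case using K_comp by simp
    next
      case (Suc j)
      show ?case
      proof
        assume le: "n + Suc j \<le> length s"
        then have IH: "(K, comp d r (take (n + j) s)) \<in> (tree_edges d r)\<^sup>*" using Suc by simp
        have "take (n + Suc j) s = take (n + j) s @ [s ! (n + j)]"
          using le by (simp add: take_Suc_conv_app_nth)
        then have "(comp d r (take (n + j) s), comp d r (take (n + Suc j) s)) \<in> tree_edges d r"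
          unfolding tree_edges_def by auto
        then show "(K, comp d r (take (n + Suc j) s)) \<in> (tree_edges d r)\<^sup>*"
          using IH by (rule rtrancl_into_rtrancl[rotated])
      qed
    qed
  qed
  from this[rule_format, of "length s - n"] ls show ?thesis by simp
qed

end



lemma ex1_eq: "\<exists>!x. P x \<Longrightarrow> P a \<Longrightarrow> P b \<Longrightarrow> a = b" by blast

context J begin

lemma S_step:
  assumes sS: "s \<in> S" and ls: "n \<le> length s" and xK: "lst (s @ [x]) \<in> K"
  shows "s @ [x] \<in> S"
proof -
  define V where "V = comp d r (s @ [x])"
  have te: "(comp d r s, V) \<in> tree_edges d r" unfolding V_def tree_edges_def by blast
  have rch: "(last vs, comp d r s) \<in> (tree_edges d r)\<^sup>*" using reach_tree[OF sS ls] last_vs by simp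
  have lift: "liftable (comp d r s, V) (last (path_edges vs))"
    unfolding liftable_def pe_last
  proof
    fix v assume "v \<in> snd (comp d r s, V)"
    then have "v \<in> comp d r (s @ [x])" by (simp add: V_def)
    then have "lst v \<in> comp d r (lst (s @ [x]))" by (rule lst_comp)
    then have "lst v \<in> K" using xK K_comp' by simp
    moreover have "suffix (lst v) v" by (simp add: lst_def suffix_drop)
    ultimately show "\<exists>p\<in>snd (vs ! (n - 1), K). suffix p v" by auto
  qed
  have je: "(comp d r s, V) \<in> jungle_edges d r vs"
    unfolding jungle_edges_def by (rule UnI2) (simp add: te rch lift)
  have Vj: "V \<in> jungle_vertices d r vs" unfolding jungle_vertices_def
    using je by (intro UnI2 image_eqI[where x="(comp d r s, V)"]) auto
  have Pj: "comp d r s \<in> jungle_vertices d r vs" unfolding jungle_vertices_def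
    using je by (intro UnI1 image_eqI[where x="(comp d r s, V)"]) auto
  have "\<exists>q. q \<in> S \<and> comp d r q = V" using ex1_implies_ex[OF bspec[OF uniq Vj]] .
  then obtain s' where s': "s' \<in> S" "comp d r s' = V" by blast
  have "s' \<in> comp d r s'" by (rule comp_self)
  then have s'V: "s' \<in> comp d r (s @ [x])" using s'(2) V_def by simp
  have ls': "length s' = Suc (length s)" using comp_length[OF s'V] by simp
  define p where "p = take (length s) s'"
  have pS: "p \<in> S" using S_pref[OF s'(1)] by (simp add: p_def take_is_prefix)
  have "p \<in> comp d r (take (length s) (s @ [x]))" unfolding p_def by (rule comp_take[OF s'V])
  then have pc: "comp d r p = comp d r s" using comp_eq by simp
  have sS': "s \<in> S \<and> comp d r s = comp d r s" using sS by simp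
  have pS': "p \<in> S \<and> comp d r p = comp d r s" using pS pc by simp
  have ps: "p = s"
    by (rule ex1_eq[where P="\<lambda>q. q \<in> S \<and> comp d r q = comp d r s", OF bspec[OF uniq Pj] pS' sS'])
  have s'ne: "s' \<noteq> []" using ls' by auto
  have "butlast s' = p" using ls' by (simp add: p_def butlast_conv_take)
  moreover have "s' = butlast s' @ [last s']" using s'ne by simp
  ultimately have s'eq: "s' = s @ [last s']" using ps by simp
  define x' where "x' = last s'"
  define a where "a = lst s"
  have aK: "a \<in> K" using lst_K[OF sS ls] a_def by simp
  have ax: "drop (length s - n) (s @ [x]) = a @ [x]" using ls by (simp add: a_def lst_def)
  have ax': "drop (length s - n) (s @ [x']) = a @ [x']" using ls by (simp add: a_def lst_def)
  have tl_ax: "drop 1 (a @ [x]) = lst (s @ [x])" using ls npos ax[symmetric]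
    by (simp add: lst_def Suc_diff_le)
  define D where "D = comp d r (a @ [x])"
  have lc: "legit_child d r (vs ! (n - 1), vs ! n) (K, D)"
    unfolding legit_child_def
  proof (intro conjI)
    have "(comp d r a, comp d r (a @ [x])) \<in> tree_edges d r" unfolding tree_edges_def by blast
    then show "(K, D) \<in> tree_edges d r" using K_comp'[OF aK] D_def by simp
    show "fst (K, D) = snd (vs ! (n - 1), vs ! n)" by (simp add: K_def)
    show "liftable (K, D) (vs ! (n - 1), vs ! n)" unfolding liftable_def
    proof
      fix v assume "v \<in> snd (K, D)"
      then have "v \<in> comp d r (a @ [x])" by (simp add: D_def)
      then have "drop 1 v \<in> comp d r (drop 1 (a @ [x]))" by (rule comp_drop)
      then have "drop 1 v \<in> K" using tl_ax xK K_comp' by simp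
      moreover have "suffix (drop 1 v) v" by (rule suffix_drop)
      ultimately show "\<exists>p\<in>snd (vs ! (n - 1), vs ! n). suffix p v" using K_def by auto
    qed
  qed
  have "\<forall>f. legit_child d r (vs ! (n - 1), vs ! n) f \<longrightarrow> label f = 1"
    using trunk unfolding jungle_trunk_def Let_def by blast
  then have lab: "label (K, D) = 1" using lc by blast
  have cK: "card K > 0" using finK aK card_gt_0_iff by blast
  have "real (card D) / real (card K) = 1" using lab by (simp add: label_def)
  then have cD: "card D = card K" using cK by (simp add: divide_eq_1_iff)
  have fibD: "\<forall>c\<in>K. card {y. c @ [y] \<in> D} = card {y. a @ [y] \<in> D}"
  proof
    fix c assume "c \<in> K"
    then have "c \<in> comp d r a" using K_comp'[OF aK] by simp
    then have ac: "(a, c) \<in> (E0 d r)\<^sup>*" by (simp add: comp_def)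
    show "card {y. c @ [y] \<in> D} = card {y. a @ [y] \<in> D}"
      unfolding D_def by (rule fiber_right[OF rev ac, symmetric])
  qed
  have Dsp: "\<forall>e\<in>D. e \<noteq> [] \<and> butlast e \<in> K"
  proof
    fix e assume "e \<in> D"
    then have eD: "e \<in> comp d r (a @ [x])" by (simp add: D_def)
    then have "length e = length (a @ [x])" by (rule comp_length)
    then have le: "length e = Suc n" using K_len[OF aK] by simp
    then have "e \<noteq> []" by auto
    have "take n e \<in> comp d r (take n (a @ [x]))" using eD by (rule comp_take)
    then show "e \<noteq> [] \<and> butlast e \<in> K" using le \<open>e \<noteq> []\<close> K_len[OF aK] K_comp'[OF aK]
      by (simp add: butlast_conv_take)
  qed
  have "card D = card K * card {y. a @ [y] \<in> D}"
    by (rule card_split_right[OF finK Dsp fibD])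
  then have one: "card {y. a @ [y] \<in> D} = 1" using cD cK by simp
  have xin: "x \<in> {y. a @ [y] \<in> D}" using comp_self D_def by auto
  have "s @ [x'] \<in> comp d r (s @ [x])" using s'V s'eq x'_def by simp
  then have "drop (length s - n) (s @ [x']) \<in> comp d r (drop (length s - n) (s @ [x]))"
    by (rule comp_drop)
  then have x'in: "x' \<in> {y. a @ [y] \<in> D}" using ax ax' D_def by simp
  from one obtain z where "{y. a @ [y] \<in> D} = {z}" by (rule card_1_singletonE)
  then have "x \<in> {z}" "x' \<in> {z}" using xin x'in by simp_all
  then have "x' = x" by simp
  then show ?thesis using s'eq s'(1) x'_def by simp
qed

lemma lst_snoc: "n \<le> length s \<Longrightarrow> lst (s @ [x]) = tl (lst s) @ [x]"
proof -
  assume ls: "n \<le> length s"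
  have "lst (s @ [x]) = drop (Suc (length s - n)) (s @ [x])" using ls npos by (simp add: lst_def Suc_diff_le)
  also have "\<dots> = drop (Suc (length s - n)) s @ [x]" using ls npos by simp
  also have "drop (Suc (length s - n)) s = tl (lst s)" by (simp add: lst_def drop_Suc tl_drop)
  finally show ?thesis .
qed

lemma walk: "(a, b) \<in> G\<^sup>* \<Longrightarrow> s \<in> S \<Longrightarrow> n \<le> length s \<Longrightarrow> lst s = a \<Longrightarrow>
    \<exists>m. s @ m \<in> S \<and> lst (s @ m) = b"
proof (induction rule: rtrancl_induct)
  case base then show ?case by (intro exI[of _ "[]"]) simp
next
  case (step b b')
  obtain m where m: "s @ m \<in> S" "lst (s @ m) = b" using step(3)[OF step(4) step(5) step(6)] by blast
  have bb: "b \<in> K" "b' \<in> K" "tl b = butlast b'" using step(2) by (auto simp: G_def)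
  have lsm: "n \<le> length (s @ m)" using step(5) by simp
  have "lst ((s @ m) @ [last b']) = tl b @ [last b']" using lst_snoc[OF lsm] m(2) by simp
  also have "\<dots> = b'" using bb K_ne by simp
  finally have l: "lst ((s @ m) @ [last b']) = b'" .
  then have "(s @ m) @ [last b'] \<in> S" using S_step[OF m(1) lsm] bb(2) by simp
  then show ?case using l by (intro exI[of _ "m @ [last b']"]) simp
qed

lemma reach_w: "s \<in> S \<Longrightarrow> n \<le> length s \<Longrightarrow> (w, lst s) \<in> G\<^sup>*"
proof (induction s rule: rev_induct)
  case Nil then show ?case using npos by simp
next
  case (snoc x p)
  show ?case
  proof (cases "length (p @ [x]) = n")
    case True
    obtain l where pl: "p @ [x] = w @ l" using S_long[OF snoc(2) snoc(3)] by blast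
    then have "length (p @ [x]) = length (w @ l)" by simp
    then have "l = []" using True w_len by simp
    then have "p @ [x] = w" using pl by simp
    then show ?thesis using w_len by (simp add: lst_def)
  next
    case False
    then have lp: "n \<le> length p" using snoc(3) by simp
    have pS: "p \<in> S" using S_pref[OF snoc(2)] by simp
    have IH: "(w, lst p) \<in> G\<^sup>*" using snoc(1)[OF pS lp] .
    have "(lst p, lst (p @ [x])) \<in> G" using lst_K[OF pS lp] lst_K[OF snoc(2) snoc(3)] lst_snoc[OF lp]
      by (simp add: G_def)
    then show ?thesis using IH by (rule rtrancl_into_rtrancl[rotated])
  qed
qed

lemma lst_app: "n \<le> length s \<Longrightarrow> lst s = w \<Longrightarrow> lst (s @ q) = lst (w @ q)"
proof -
  assume ls: "n \<le> length s" and lw: "lst s = w"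
  from lw have "drop (length s - n) s = w" by (simp add: lst_def)
  then have "s = take (length s - n) s @ w" by (metis append_take_drop_id)
  then obtain s0 where s0: "s = s0 @ w" by blast
  then show ?thesis using w_len by (simp add: lst_def)
qed

lemma replay: "w @ l \<in> S \<Longrightarrow> s \<in> S \<Longrightarrow> n \<le> length s \<Longrightarrow> lst s = w \<Longrightarrow> s @ l \<in> S"
proof (induction l rule: rev_induct)
  case Nil then show ?case by simp
next
  case (snoc x l)
  have "prefix (w @ l) (w @ l @ [x])" by simp
  then have "w @ l \<in> S" using S_pref snoc(2) by simp
  then have sl: "s @ l \<in> S" using snoc(1)[OF _ snoc(3) snoc(4) snoc(5)] by simp
  have "lst (s @ l @ [x]) = lst (w @ l @ [x])" by (rule lst_app[OF snoc(4) snoc(5)])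
  also have "\<dots> \<in> K" using lst_K[OF snoc(2)] w_len by simp
  finally have "lst ((s @ l) @ [x]) \<in> K" by simp
  then have "(s @ l) @ [x] \<in> S" using S_step[OF sl] snoc(4) by simp
  then show ?case by simp
qed

lemma cycle: "s \<in> S \<Longrightarrow> n \<le> length s \<Longrightarrow> lst s = w \<Longrightarrow>
   \<exists>m. j \<le> length m \<and> s @ m \<in> S \<and> lst (s @ m) = w"
proof (induction j)
  case 0 then show ?case by (intro exI[of _ "[]"]) simp
next
  case (Suc j)
  obtain m where m: "j \<le> length m" "s @ m \<in> S" "lst (s @ m) = w" using Suc(1)[OF Suc(2) Suc(3) Suc(4)] by blast
  have "card (G `` {w}) > 0" using out_deg[OF wK'] beta_pos by simp
  then have "G `` {w} \<noteq> {}" by auto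
  then obtain b where "b \<in> G `` {w}" by blast
  then have wb: "(w, b) \<in> G" by simp
  have bb: "b \<in> K" "tl w = butlast b" using wb by (auto simp: G_def)
  have lsm: "n \<le> length (s @ m)" using Suc(3) by simp
  have "lst ((s @ m) @ [last b]) = tl w @ [last b]" using lst_snoc[OF lsm] m(3) by simp
  also have "\<dots> = b" using bb K_ne by simp
  finally have l1: "lst ((s @ m) @ [last b]) = b" .
  then have s1: "(s @ m) @ [last b] \<in> S" using S_step[OF m(2) lsm] bb(1) by simp
  have bw: "(b, w) \<in> G\<^sup>*" using G_back[of w b] wb wK' by blast
  have lsm1: "n \<le> length ((s @ m) @ [last b])" using lsm by simp
  obtain m2 where m2: "((s @ m) @ [last b]) @ m2 \<in> S" "lst (((s @ m) @ [last b]) @ m2) = w"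
    using walk[OF bw s1 lsm1 l1] by blast
  show ?case using m(1) m2 by (intro exI[of _ "m @ [last b] @ m2"]) simp
qed

theorem main: "\<forall>t u v. t @ u @ v \<in> S \<longrightarrow> (\<exists>W. t @ u @ v @ W @ u \<in> S)"
proof (intro allI impI)
  fix t u v assume z: "t @ u @ v \<in> S"
  obtain y where zy: "t @ u @ v @ y \<in> S" "n \<le> length (t @ u @ v @ y)"
  proof (cases "n \<le> length (t @ u @ v)")
    case True then show ?thesis using that[of "[]"] z by simp
  next
    case False
    then have "prefix (t @ u @ v) w" using S_short z by simp
    then obtain y where "w = t @ u @ v @ y" by (auto simp: prefix_def)
    then show ?thesis using that[of y] S_w w_len by simp
  qed
  define z' where "z' = t @ u @ v @ y"
  have zS: "z' \<in> S" and lz: "n \<le> length z'" using zy z'_def by auto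
  have "(w, lst z') \<in> G\<^sup>*" using reach_w[OF zS lz] .
  then have "(lst z', w) \<in> G\<^sup>*" using G_back wK' by blast
  then obtain m1 where m1: "z' @ m1 \<in> S" "lst (z' @ m1) = w" using walk[OF _ zS lz refl] by blast
  have lzm: "n \<le> length (z' @ m1)" using lz by simp
  obtain m2 where m2: "n \<le> length m2" "(z' @ m1) @ m2 \<in> S" "lst ((z' @ m1) @ m2) = w"
    using cycle[OF m1(1) lzm m1(2), of n] by blast
  obtain l where l: "z' = w @ l" using S_long[OF zS lz] by blast
  define X where "X = (z' @ m1) @ m2"
  have XS: "X @ l \<in> S" using replay[of l X] l zS m2 by (simp add: X_def)
  define s0 where "s0 = z' @ m1 @ take (length m2 - n) m2"
  have "take (length X - n) X = s0" using m2(1) by (simp add: X_def s0_def)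
  moreover have "drop (length X - n) X = w" using m2(3) by (simp add: X_def lst_def)
  moreover have "X = take (length X - n) X @ drop (length X - n) X" by simp
  ultimately have "X = s0 @ w" by simp
  then have "s0 @ z' \<in> S" using XS l by simp
  moreover have "prefix (s0 @ t @ u) (s0 @ z')" by (simp add: z'_def)
  ultimately have "s0 @ t @ u \<in> S" using S_pref by blast
  moreover have "s0 @ t @ u = t @ u @ v @ (y @ m1 @ take (length m2 - n) m2 @ t) @ u"
    by (simp add: s0_def z'_def)
  ultimately show "\<exists>W. t @ u @ v @ W @ u \<in> S" by metis
qed

end

theorem theorem5p7:
  fixes d :: "'s::finite \<Rightarrow> 'q::finite \<Rightarrow> 'q"
    and r :: "'q \<Rightarrow> 's \<Rightarrow> 's"
    and vs :: "'q list set list" and n :: nat and S :: "'q list set"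
  assumes "connected_aut d"
    and "bireversible d r"
    and "\<not> (\<exists>V. is_branch d r V \<and> active_branch V \<and> self_liftable_branch V)"
    and "jungle_trunk d r vs n"
    and "liana d r vs S"
  shows "\<forall>t u v. t @ u @ v \<in> S \<longrightarrow> (\<exists>w. t @ u @ v @ w @ u \<in> S)"
proof -
  from assms(5) obtain w L where wL: "w \<in> last vs" "\<forall>l\<in>L. \<forall>p. prefix p l \<longrightarrow> p \<in> L"
      "S = {p. prefix p w} \<union> (\<lambda>l. w @ l) ` L" "\<forall>s\<in>S. jword d r vs s"
      "\<forall>V\<in>jungle_vertices d r vs. \<exists>!s. s \<in> S \<and> comp d r s = V"
    unfolding liana_def by blast
  interpret J d r vs n S w L
    by (unfold_locales) (use assms(2) assms(4) wL in auto)
  show ?thesis by (rule main)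
qed

end
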